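(* Suppose $\xi_r(\varpi^N)<1/2$ for some $r\in\{0,\ldots,N\}$. Then for every $\hat A\in\arg\min_{A\in\mathbb{R}^{n\times s}}\mathcal{J}(A)$ and every $A\in\mathbb{R}^{n\times s}$, $$\|\phi(A)-\phi(\hat A)\|_1\le\frac{2}{1-2\xi_r(\varpi^N)}\,\delta_r(A).$$ Moreover, if there exists $\tilde A\in\mathbb{R}^{n\times s}$ with $\|\phi(\tilde A)\|_0\le r$, then $$\arg\min_{A}\mathcal{J}(A)=\{A\in\mathbb{R}^{n\times s}:\|\phi(A)\|_0\le r\}=\{A\in\mathbb{R}^{n\times s}:\phi(A)=\phi(\tilde A)\}.$$
   Context: Data: integers $n,s,N\ge1$ and a dataset $\varpi^N=((x_1,y_1),\ldots,(x_N,y_N))$ with $x_t\in\mathbb{R}^n$, $y_t\in\mathbb{R}$. Let $\mathbb{T}=\{1,\ldots,N\}$, $\mathbb{S}=\{1,\ldots,s\}$. For $A=[a_1\ \cdots\ a_s]\in\mathbb{R}^{n\times s}$, $\sigma_A:\mathbb{T}\to\mathbb{S}$ is a switching signal satisfying $\sigma_A(t)\in\arg\min_{i\in\mathbb{S}}|y_t-x_t^\top a_i|$ for all $t$, selected uniquely by a fixed rule depending only on $A$ and the data (among all admissible choices, one maximizing $\min_{i}|I_i(A)|$, ties then broken by assigning the smallest admissible index). $I_i(A)=\{t\in\mathbb{T}:\sigma_A(t)=i\}$. Define $\phi(A)=\big(y_1-x_1^\top a_{\sigma_A(1)},\ldots,y_N-x_N^\top a_{\sigma_A(N)}\big)^\top\in\mathbb{R}^N$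 and $\mathcal{J}(A)=\|\phi(A)\|_1=\sum_{t=1}^N\min_{i\in\mathbb{S}}|y_t-a_i^\top x_t|$. For $\mathcal{T}\subset\mathbb{T}$, $\phi_{\mathcal{T}}(A)$ is the subvector of $\phi(A)$ indexed by $\mathcal{T}$. $\|w\|_0$ is the number of nonzero entries of $w$; $\mathcal{S}_r=\{w\in\mathbb{R}^N:\|w\|_0\le r\}$, and $\delta_r(A)=\inf_{w\in\mathcal{S}_r}\|\phi(A)-w\|_1$ (sum of the $N-r$ smallest absolute entries of $\phi(A)$). The $r$-th concentration ratio is $$\xi_r(\varpi^N)=\sup\Big\{\frac{\|\phi_{\mathcal{T}}(A)-\phi_{\mathcal{T}}(A')\|_1}{\|\phi(A)-\phi(A')\|_1}: A,A'\in\mathbb{R}^{n\times s},\ \mathcal{T}\subset\mathbb{T},\ \phi(A)\ne\phi(A'),\ |\mathcal{T}|\le r\Big\}.$$ *)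

theory Defs
  imports Complex_Main
begin

text \<open>Conventions (0-based indices): data points t \<in> {0..<N}, modes i \<in> {0..<s},
  coordinates j \<in> {0..<n}.  Regressor x t j, output y t.  A matrix
  A = [a_0 ... a_{s-1}] in R^{n x s} is a function A i j (column i, entry j),
  required to vanish outside the index range (set mats).\<close>

definition mats :: "nat \<Rightarrow> nat \<Rightarrow> (nat \<Rightarrow> nat \<Rightarrow> real) set" where
  "mats n s = {A. \<forall>i j. (s \<le> i \<or> n \<le> j) \<longrightarrow> A i j = 0}"

definition res :: "nat \<Rightarrow> (nat \<Rightarrow> nat \<Rightarrow> real) \<Rightarrow> (nat \<Rightarrow> real)
    \<Rightarrow> (nat \<Rightarrow> nat \<Rightarrow> real) \<Rightarrow> nat \<Rightarrow> nat \<Rightarrow> real" where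
  "res n x y A t i = y t - (\<Sum>j<n. x t j * A i j)"

definition admissible :: "nat \<Rightarrow> nat \<Rightarrow> nat \<Rightarrow> (nat \<Rightarrow> nat \<Rightarrow> real) \<Rightarrow> (nat \<Rightarrow> real)
    \<Rightarrow> (nat \<Rightarrow> nat \<Rightarrow> real) \<Rightarrow> (nat \<Rightarrow> nat) \<Rightarrow> bool" where
  "admissible n s N x y A \<sigma> \<longleftrightarrow>
     (\<forall>t<N. \<sigma> t < s \<and> (\<forall>i<s. \<bar>res n x y A t (\<sigma> t)\<bar> \<le> \<bar>res n x y A t i\<bar>))
     \<and> (\<forall>t. N \<le> t \<longrightarrow> \<sigma> t = 0)"

definition minI :: "nat \<Rightarrow> nat \<Rightarrow> (nat \<Rightarrow> nat) \<Rightarrow> nat" where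
  "minI s N \<sigma> = Min ((\<lambda>i. card {t. t < N \<and> \<sigma> t = i}) ` {..<s})"

definition best_signals :: "nat \<Rightarrow> nat \<Rightarrow> nat \<Rightarrow> (nat \<Rightarrow> nat \<Rightarrow> real) \<Rightarrow> (nat \<Rightarrow> real)
    \<Rightarrow> (nat \<Rightarrow> nat \<Rightarrow> real) \<Rightarrow> (nat \<Rightarrow> nat) set" where
  "best_signals n s N x y A = {\<sigma>. admissible n s N x y A \<sigma> \<and>
      (\<forall>\<tau>. admissible n s N x y A \<tau> \<longrightarrow> minI s N \<tau> \<le> minI s N \<sigma>)}"

definition lex_less :: "nat \<Rightarrow> (nat \<Rightarrow> nat) \<Rightarrow> (nat \<Rightarrow> nat) \<Rightarrow> bool" where
  "lex_less N \<sigma> \<tau> \<longleftrightarrow> (\<exists>t<N. (\<forall>u<t. \<sigma> u = \<tau> u) \<and> \<sigma> t < \<tau> t)"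

definition sigmaA :: "nat \<Rightarrow> nat \<Rightarrow> nat \<Rightarrow> (nat \<Rightarrow> nat \<Rightarrow> real) \<Rightarrow> (nat \<Rightarrow> real)
    \<Rightarrow> (nat \<Rightarrow> nat \<Rightarrow> real) \<Rightarrow> nat \<Rightarrow> nat" where
  "sigmaA n s N x y A = (THE \<sigma>. \<sigma> \<in> best_signals n s N x y A \<and>
      (\<forall>\<tau>\<in>best_signals n s N x y A. \<tau> \<noteq> \<sigma> \<longrightarrow> lex_less N \<sigma> \<tau>))"

definition phi :: "nat \<Rightarrow> nat \<Rightarrow> nat \<Rightarrow> (nat \<Rightarrow> nat \<Rightarrow> real) \<Rightarrow> (nat \<Rightarrow> real)
    \<Rightarrow> (nat \<Rightarrow> nat \<Rightarrow> real) \<Rightarrow> nat \<Rightarrow> real" where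
  "phi n s N x y A t = (if t < N then res n x y A t (sigmaA n s N x y A t) else 0)"

definition l1 :: "nat \<Rightarrow> (nat \<Rightarrow> real) \<Rightarrow> real" where
  "l1 N w = (\<Sum>t<N. \<bar>w t\<bar>)"

definition l0 :: "nat \<Rightarrow> (nat \<Rightarrow> real) \<Rightarrow> nat" where
  "l0 N w = card {t. t < N \<and> w t \<noteq> 0}"

definition J :: "nat \<Rightarrow> nat \<Rightarrow> nat \<Rightarrow> (nat \<Rightarrow> nat \<Rightarrow> real) \<Rightarrow> (nat \<Rightarrow> real)
    \<Rightarrow> (nat \<Rightarrow> nat \<Rightarrow> real) \<Rightarrow> real" where
  "J n s N x y A = l1 N (phi n s N x y A)"

definition delta :: "nat \<Rightarrow> nat \<Rightarrow> nat \<Rightarrow> (nat \<Rightarrow> nat \<Rightarrow> real) \<Rightarrow> (nat \<Rightarrow> real)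
    \<Rightarrow> nat \<Rightarrow> (nat \<Rightarrow> nat \<Rightarrow> real) \<Rightarrow> real" where
  "delta n s N x y r A = Inf {l1 N (\<lambda>t. phi n s N x y A t - w t) | w. l0 N w \<le> r}"

definition xi :: "nat \<Rightarrow> nat \<Rightarrow> nat \<Rightarrow> (nat \<Rightarrow> nat \<Rightarrow> real) \<Rightarrow> (nat \<Rightarrow> real) \<Rightarrow> nat \<Rightarrow> real" where
  "xi n s N x y r = Sup {(\<Sum>t\<in>T. \<bar>phi n s N x y A t - phi n s N x y A' t\<bar>)
                          / l1 N (\<lambda>t. phi n s N x y A t - phi n s N x y A' t)
       | A A' T. A \<in> mats n s \<and> A' \<in> mats n s \<and> T \<subseteq> {..<N}
                 \<and> phi n s N x y A \<noteq> phi n s N x y A' \<and> card T \<le> r}"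

definition argminJ :: "nat \<Rightarrow> nat \<Rightarrow> nat \<Rightarrow> (nat \<Rightarrow> nat \<Rightarrow> real) \<Rightarrow> (nat \<Rightarrow> real)
    \<Rightarrow> (nat \<Rightarrow> nat \<Rightarrow> real) set" where
  "argminJ n s N x y = {A \<in> mats n s. \<forall>B \<in> mats n s. J n s N x y A \<le> J n s N x y B}"

end

theory Submission
  imports Defs
begin

lemma core:
  fixes a b :: "nat \<Rightarrow> real" and T :: "nat set" and c :: real
  assumes T: "T \<subseteq> {..<N}"
    and hx: "(\<Sum>t\<in>T. \<bar>a t - b t\<bar>) \<le> c * l1 N (\<lambda>t. a t - b t)"
    and hJ: "l1 N b \<le> l1 N a"
  shows "(1 - 2*c) * l1 N (\<lambda>t. a t - b t) \<le> 2 * (\<Sum>t\<in>{..<N} - T. \<bar>a t\<bar>)"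
proof -
  let ?U = "{..<N}" and ?C = "{..<N} - T"
  have f: "finite ?U" by simp
  have s: "\<And>g. sum g ?U = sum g ?C + sum g T"
    using sum.subset_diff[OF T f] by simp
  have b1: "(\<Sum>t\<in>T. \<bar>b t\<bar>) \<ge> (\<Sum>t\<in>T. \<bar>a t\<bar>) - (\<Sum>t\<in>T. \<bar>a t - b t\<bar>)"
  proof -
    have "(\<Sum>t\<in>T. \<bar>a t\<bar> - \<bar>a t - b t\<bar>) \<le> (\<Sum>t\<in>T. \<bar>b t\<bar>)"
      by (rule sum_mono) linarith
    thus ?thesis by (simp add: sum_subtractf)
  qed
  have b2: "(\<Sum>t\<in>?C. \<bar>b t\<bar>) \<ge> (\<Sum>t\<in>?C. \<bar>a t - b t\<bar>) - (\<Sum>t\<in>?C. \<bar>a t\<bar>)"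
  proof -
    have "(\<Sum>t\<in>?C. \<bar>a t - b t\<bar> - \<bar>a t\<bar>) \<le> (\<Sum>t\<in>?C. \<bar>b t\<bar>)"
      by (rule sum_mono) linarith
    thus ?thesis by (simp add: sum_subtractf)
  qed
  have e1: "l1 N b = (\<Sum>t\<in>?C. \<bar>b t\<bar>) + (\<Sum>t\<in>T. \<bar>b t\<bar>)" unfolding l1_def by (rule s)
  have e2: "l1 N a = (\<Sum>t\<in>?C. \<bar>a t\<bar>) + (\<Sum>t\<in>T. \<bar>a t\<bar>)" unfolding l1_def by (rule s)
  have e3: "l1 N (\<lambda>t. a t - b t) = (\<Sum>t\<in>?C. \<bar>a t - b t\<bar>) + (\<Sum>t\<in>T. \<bar>a t - b t\<bar>)"
    unfolding l1_def by (rule s)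
  show ?thesis using b1 b2 e1 e2 e3 hx hJ by (simp add: algebra_simps)
qed

lemma l1_nonneg: "0 \<le> l1 N w"
  unfolding l1_def by (simp add: sum_nonneg)

lemma phi_out: "N \<le> t \<Longrightarrow> phi n s N x y A t = 0"
  unfolding phi_def by simp

lemma xi_bound:
  assumes "A \<in> mats n s" "A' \<in> mats n s" "T \<subseteq> {..<N}" "card T \<le> r"
  shows "(\<Sum>t\<in>T. \<bar>phi n s N x y A t - phi n s N x y A' t\<bar>)
          \<le> xi n s N x y r * l1 N (\<lambda>t. phi n s N x y A t - phi n s N x y A' t)"
proof (cases "phi n s N x y A = phi n s N x y A'")
  case True
  thus ?thesis by (simp add: l1_def)
next
  case False
  let ?v = "\<lambda>t. phi n s N x y A t - phi n s N x y A' t"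
  let ?S = "{(\<Sum>t\<in>T. \<bar>phi n s N x y A t - phi n s N x y A' t\<bar>)
                          / l1 N (\<lambda>t. phi n s N x y A t - phi n s N x y A' t)
       | A A' T. A \<in> mats n s \<and> A' \<in> mats n s \<and> T \<subseteq> {..<N}
                 \<and> phi n s N x y A \<noteq> phi n s N x y A' \<and> card T \<le> r}"
  have le1: "\<And>T. T \<subseteq> {..<N} \<Longrightarrow> (\<Sum>t\<in>T. \<bar>w t\<bar>) \<le> l1 N w" for w :: "nat \<Rightarrow> real"
    unfolding l1_def by (rule sum_mono2) auto
  have bdd: "bdd_above ?S"
  proof (rule bdd_aboveI[where M=1])
    fix z assume "z \<in> ?S"
    then obtain B B' U where z: "z = (\<Sum>t\<in>U. \<bar>phi n s N x y B t - phi n s N x y B' t\<bar>)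
                          / l1 N (\<lambda>t. phi n s N x y B t - phi n s N x y B' t)" and U: "U \<subseteq> {..<N}"
      by blast
    have "(\<Sum>t\<in>U. \<bar>phi n s N x y B t - phi n s N x y B' t\<bar>) \<le> l1 N (\<lambda>t. phi n s N x y B t - phi n s N x y B' t)"
      using le1[OF U] by simp
    moreover have "0 \<le> (\<Sum>t\<in>U. \<bar>phi n s N x y B t - phi n s N x y B' t\<bar>)" by (simp add: sum_nonneg)
    moreover have "0 \<le> l1 N (\<lambda>t. phi n s N x y B t - phi n s N x y B' t)" by (rule l1_nonneg)
    ultimately show "z \<le> 1" unfolding z
      by (cases "l1 N (\<lambda>t. phi n s N x y B t - phi n s N x y B' t) = 0") auto
  qed
  have mem: "(\<Sum>t\<in>T. \<bar>?v t\<bar>) / l1 N ?v \<in> ?S" using assms False by blast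
  have le: "(\<Sum>t\<in>T. \<bar>?v t\<bar>) / l1 N ?v \<le> xi n s N x y r"
    unfolding xi_def by (rule cSup_upper[OF mem bdd])
  obtain t where t: "phi n s N x y A t \<noteq> phi n s N x y A' t" using False by blast
  have tN: "t < N" using t phi_out by (metis not_le)
  have "0 < \<bar>?v t\<bar>" using t by simp
  also have "\<bar>?v t\<bar> \<le> l1 N ?v" using le1[of "{t}" ?v] tN by simp
  finally have pos: "0 < l1 N ?v" .
  show ?thesis using le pos by (simp add: divide_le_eq mult.commute)
qed

lemma delta_ge:
  assumes "A \<in> mats n s" "Ahat \<in> mats n s"
    and "J n s N x y Ahat \<le> J n s N x y A" and xi: "xi n s N x y r < 1/2"
  shows "l1 N (\<lambda>t. phi n s N x y A t - phi n s N x y Ahat t)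
              \<le> 2 / (1 - 2 * xi n s N x y r) * delta n s N x y r A"
proof -
  let ?a = "phi n s N x y A" and ?b = "phi n s N x y Ahat" and ?c = "xi n s N x y r"
  have cpos: "0 < 1 - 2 * ?c" using xi by simp
  have "l1 N (\<lambda>t. ?a t - ?b t) \<le> 2 / (1 - 2 * ?c) * z"
    if zin: "z \<in> {l1 N (\<lambda>t. ?a t - w t) | w. l0 N w \<le> r}" for z
  proof -
    obtain w where z: "z = l1 N (\<lambda>t. ?a t - w t)" and w: "l0 N w \<le> r" using zin by blast
    let ?T = "{t. t < N \<and> w t \<noteq> 0}"
    have T: "?T \<subseteq> {..<N}" by auto
    have hx: "(\<Sum>t\<in>?T. \<bar>?a t - ?b t\<bar>) \<le> ?c * l1 N (\<lambda>t. ?a t - ?b t)"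
      by (rule xi_bound[OF assms(1,2) T]) (use w in \<open>simp add: l0_def\<close>)
    have "(1 - 2*?c) * l1 N (\<lambda>t. ?a t - ?b t) \<le> 2 * (\<Sum>t\<in>{..<N} - ?T. \<bar>?a t\<bar>)"
      by (rule core[OF T hx]) (use assms(3) in \<open>simp add: J_def\<close>)
    also have "(\<Sum>t\<in>{..<N} - ?T. \<bar>?a t\<bar>) = (\<Sum>t\<in>{..<N} - ?T. \<bar>?a t - w t\<bar>)"
      by (rule sum.cong) auto
    also have "\<dots> \<le> z" unfolding z l1_def by (rule sum_mono2) auto
    finally have "(1 - 2*?c) * l1 N (\<lambda>t. ?a t - ?b t) \<le> 2 * z" by simp
    thus ?thesis using cpos by (simp add: field_simps)
  qed
  note H = this
  have ne: "{l1 N (\<lambda>t. ?a t - w t) | w. l0 N w \<le> r} \<noteq> {}"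
  proof -
    have "l1 N (\<lambda>t. ?a t - (\<lambda>t. 0) t) \<in> {l1 N (\<lambda>t. ?a t - w t) | w. l0 N w \<le> r}"
      by (intro CollectI exI[where x="\<lambda>t. 0"]) (simp add: l0_def)
    thus ?thesis by blast
  qed
  have "l1 N (\<lambda>t. ?a t - ?b t) / (2 / (1 - 2 * ?c)) \<le> delta n s N x y r A"
    unfolding delta_def
  proof (rule cInf_greatest[OF ne])
    fix z assume "z \<in> {l1 N (\<lambda>t. ?a t - w t) | w. l0 N w \<le> r}"
    from H[OF this] show "l1 N (\<lambda>t. ?a t - ?b t) / (2 / (1 - 2 * ?c)) \<le> z"
      using cpos by (simp add: field_simps)
  qed
  thus ?thesis using cpos by (simp add: field_simps)
qed

lemma delta_le0:
  assumes "l0 N (phi n s N x y A) \<le> r"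
  shows "delta n s N x y r A \<le> 0"
proof -
  have "delta n s N x y r A \<le> l1 N (\<lambda>t. phi n s N x y A t - phi n s N x y A t)"
    unfolding delta_def
    apply (rule cInf_lower)
    using assms apply blast
    by (rule bdd_belowI[where m=0]) (auto simp: l1_nonneg)
  thus ?thesis by (simp add: l1_def)
qed

lemma sparse_min:
  assumes A: "A \<in> mats n s" and B: "B \<in> mats n s" and sp: "l0 N (phi n s N x y A) \<le> r"
    and xi: "xi n s N x y r < 1/2"
  shows "J n s N x y A \<le> J n s N x y B"
proof -
  let ?a = "phi n s N x y A" and ?b = "phi n s N x y B" and ?c = "xi n s N x y r"
  let ?T = "{t. t < N \<and> ?a t \<noteq> 0}" and ?C = "{..<N} - {t. t < N \<and> ?a t \<noteq> 0}"
  have T: "?T \<subseteq> {..<N}" by auto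
  have hx: "(\<Sum>t\<in>?T. \<bar>?a t - ?b t\<bar>) \<le> ?c * l1 N (\<lambda>t. ?a t - ?b t)"
    by (rule xi_bound[OF A B T]) (use sp in \<open>simp add: l0_def\<close>)
  have s: "\<And>g. sum g {..<N} = sum g ?C + sum g ?T"
    using sum.subset_diff[OF T] by simp
  have b1: "(\<Sum>t\<in>?T. \<bar>?b t\<bar>) \<ge> (\<Sum>t\<in>?T. \<bar>?a t\<bar>) - (\<Sum>t\<in>?T. \<bar>?a t - ?b t\<bar>)"
  proof -
    have "(\<Sum>t\<in>?T. \<bar>?a t\<bar> - \<bar>?a t - ?b t\<bar>) \<le> (\<Sum>t\<in>?T. \<bar>?b t\<bar>)"
      by (rule sum_mono) linarith
    thus ?thesis by (simp add: sum_subtractf)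
  qed
  have b2: "(\<Sum>t\<in>?C. \<bar>?b t\<bar>) = (\<Sum>t\<in>?C. \<bar>?a t - ?b t\<bar>)"
    by (rule sum.cong) auto
  have a0: "(\<Sum>t\<in>?C. \<bar>?a t\<bar>) = 0" by (rule sum.neutral) auto
  have e1: "l1 N ?b = (\<Sum>t\<in>?C. \<bar>?b t\<bar>) + (\<Sum>t\<in>?T. \<bar>?b t\<bar>)" unfolding l1_def by (rule s)
  have e2: "l1 N ?a = (\<Sum>t\<in>?C. \<bar>?a t\<bar>) + (\<Sum>t\<in>?T. \<bar>?a t\<bar>)" unfolding l1_def by (rule s)
  have e3: "l1 N (\<lambda>t. ?a t - ?b t) = (\<Sum>t\<in>?C. \<bar>?a t - ?b t\<bar>) + (\<Sum>t\<in>?T. \<bar>?a t - ?b t\<bar>)"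
    unfolding l1_def by (rule s)
  have "0 \<le> l1 N (\<lambda>t. ?a t - ?b t)" by (rule l1_nonneg)
  hence "?c * l1 N (\<lambda>t. ?a t - ?b t) \<le> (1/2) * l1 N (\<lambda>t. ?a t - ?b t)"
    using xi by (intro mult_right_mono) auto
  hence h2: "?c * l1 N (\<lambda>t. ?a t - ?b t) \<le> l1 N (\<lambda>t. ?a t - ?b t) / 2" by simp
  have "J n s N x y A = l1 N ?a" by (simp add: J_def)
  moreover have "J n s N x y B = l1 N ?b" by (simp add: J_def)
  ultimately show ?thesis using b1 b2 a0 e1 e2 e3 hx h2 by linarith
qed

lemma l1_zero_eq:
  assumes "l1 N (\<lambda>t. phi n s N x y A t - phi n s N x y B t) \<le> 0"
  shows "phi n s N x y A = phi n s N x y B"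
proof
  fix t
  show "phi n s N x y A t = phi n s N x y B t"
  proof (cases "t < N")
    case True
    have "\<bar>phi n s N x y A t - phi n s N x y B t\<bar> \<le> l1 N (\<lambda>t. phi n s N x y A t - phi n s N x y B t)"
      unfolding l1_def using True by (intro member_le_sum) auto
    thus ?thesis using assms by simp
  next
    case False thus ?thesis by (simp add: phi_out)
  qed
qed

theorem lemma3:
  fixes n s N r :: nat and x :: "nat \<Rightarrow> nat \<Rightarrow> real" and y :: "nat \<Rightarrow> real"
  assumes "1 \<le> n" and "1 \<le> s" and "1 \<le> N"
    and "r \<le> N"
    and "xi n s N x y r < 1/2"
  shows "(\<forall>Ahat \<in> argminJ n s N x y. \<forall>A \<in> mats n s.
            l1 N (\<lambda>t. phi n s N x y A t - phi n s N x y Ahat t)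
              \<le> 2 / (1 - 2 * xi n s N x y r) * delta n s N x y r A)
       \<and> (\<forall>At \<in> mats n s. l0 N (phi n s N x y At) \<le> r \<longrightarrow>
            argminJ n s N x y = {A \<in> mats n s. l0 N (phi n s N x y A) \<le> r}
          \<and> {A \<in> mats n s. l0 N (phi n s N x y A) \<le> r}
              = {A \<in> mats n s. phi n s N x y A = phi n s N x y At})"
proof -
  have cpos: "0 < 2 / (1 - 2 * xi n s N x y r)" using assms(5) by simp
  have P1: "\<forall>Ahat \<in> argminJ n s N x y. \<forall>A \<in> mats n s.
            l1 N (\<lambda>t. phi n s N x y A t - phi n s N x y Ahat t)
              \<le> 2 / (1 - 2 * xi n s N x y r) * delta n s N x y r A"
  proof (intro ballI)
    fix Ahat A assume h: "Ahat \<in> argminJ n s N x y" "A \<in> mats n s"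
    show "l1 N (\<lambda>t. phi n s N x y A t - phi n s N x y Ahat t)
              \<le> 2 / (1 - 2 * xi n s N x y r) * delta n s N x y r A"
      using h unfolding argminJ_def by (intro delta_ge assms(5)) auto
  qed
  have eqAt: "phi n s N x y Ah = phi n s N x y At"
    if "Ah \<in> argminJ n s N x y" "At \<in> mats n s" "l0 N (phi n s N x y At) \<le> r" for Ah At
  proof -
    have "l1 N (\<lambda>t. phi n s N x y At t - phi n s N x y Ah t) \<le> 2 / (1 - 2 * xi n s N x y r) * delta n s N x y r At"
      using bspec[OF bspec[OF P1 that(1)] that(2)] .
    also have "\<dots> \<le> 0" by (rule mult_nonneg_nonpos[OF less_imp_le[OF cpos] delta_le0[OF that(3)]])
    finally have "l1 N (\<lambda>t. phi n s N x y At t - phi n s N x y Ah t) \<le> 0" .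
    from l1_zero_eq[OF this] show ?thesis by simp
  qed
  have sp_arg: "A \<in> argminJ n s N x y" if "A \<in> mats n s" "l0 N (phi n s N x y A) \<le> r" for A
    unfolding argminJ_def
  proof (intro CollectI conjI ballI that(1))
    fix B assume "B \<in> mats n s"
    show "J n s N x y A \<le> J n s N x y B" by (rule sparse_min[OF that(1) \<open>B \<in> mats n s\<close> that(2) assms(5)])
  qed
  show ?thesis
  proof (intro conjI P1 ballI impI)
    fix At assume At: "At \<in> mats n s" "l0 N (phi n s N x y At) \<le> r"
    show "argminJ n s N x y = {A \<in> mats n s. l0 N (phi n s N x y A) \<le> r}"
    proof
      show "argminJ n s N x y \<subseteq> {A \<in> mats n s. l0 N (phi n s N x y A) \<le> r}"
      proof
        fix A assume A: "A \<in> argminJ n s N x y"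
        hence "A \<in> mats n s" by (simp add: argminJ_def)
        moreover have "phi n s N x y A = phi n s N x y At" by (rule eqAt[OF A At])
        ultimately show "A \<in> {A \<in> mats n s. l0 N (phi n s N x y A) \<le> r}" using At(2) by simp
      qed
      show "{A \<in> mats n s. l0 N (phi n s N x y A) \<le> r} \<subseteq> argminJ n s N x y"
      proof
        fix A assume "A \<in> {A \<in> mats n s. l0 N (phi n s N x y A) \<le> r}"
        thus "A \<in> argminJ n s N x y" by (intro sp_arg) simp_all
      qed
    qed
    show "{A \<in> mats n s. l0 N (phi n s N x y A) \<le> r} = {A \<in> mats n s. phi n s N x y A = phi n s N x y At}"
    proof
      show "{A \<in> mats n s. l0 N (phi n s N x y A) \<le> r} \<subseteq> {A \<in> mats n s. phi n s N x y A = phi n s N x y At}"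
      proof
        fix A assume "A \<in> {A \<in> mats n s. l0 N (phi n s N x y A) \<le> r}"
        hence A: "A \<in> mats n s" "l0 N (phi n s N x y A) \<le> r" by simp_all
        have "phi n s N x y A = phi n s N x y At" by (rule eqAt[OF sp_arg[OF A] At])
        thus "A \<in> {A \<in> mats n s. phi n s N x y A = phi n s N x y At}" using A(1) by simp
      qed
      show "{A \<in> mats n s. phi n s N x y A = phi n s N x y At} \<subseteq> {A \<in> mats n s. l0 N (phi n s N x y A) \<le> r}"
        using At(2) by auto
    qed
  qed
qed

end
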